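(* Let $w$ be a metric on a set $V$ of $n$ points taking positive integer values such that the graph $G_1$ (pairs at distance $1$) is connected, and let $\ell$ be an integer with $0<\ell<n/2$. Then $$\mathsf{TSP}(w)\ \ge\ n+\frac17\sum_{v\in L_\ell}\mathsf{rc}(S_v).$$
   Context: $G_1$ is the graph on $V$ whose edges are the pairs $(u,v)$ with $w(u,v)=1$. $\mathsf{TSP}(w)$ is the minimum weight of a Hamiltonian cycle on $V$ under $w$. A vertex $v$ is $\ell$-light iff there is an edge $e$ of $G_1$ incident to $v$ that is a bridge of $G_1$ and such that the connected component of $G_1\setminus e$ containing $v$ has at most $\ell$ vertices; since $\ell<n/2$ such an edge (the witness $e_v$) is unique, and $S_v$ denotes the connected component of $G_1\setminus e_v$ containing $v$. A vertex $v$ is maximal $\ell$-light iff it is $\ell$-light and there is no other $\ell$-light vertex $u$ with $v\in V(S_u)$; $L_\ell$ is the set of maximal $\ell$-light vertices. For $v\in L_\ell$ and $u\in V(S_v)$, the out-reach distance is $\mathsf{ord}(u)=\min\{w(u,u'):u'\notin V(S_v)\}$. A reconfiguration of $S_v$ is a multiset $R$ of unordered pairs of vertices of $V(S_v)$ whose induced multigraph on $V(S_v)$ is connected; $V_1(R)$ is the set of vertices of odd degree in this multigraph. Its cost is $\mathsf{cost}(R)=\sum_{(u,u')\in R}w(u,u')+\frac12\sum_{u\in V_1(R)}\mathsf{ord}(u)-(|V(S_v)|-1)$, and $\mathsf{rc}(S_v)$ is the minimum cost of a reconfiguration of $S_v$. *)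

theory Defs
  imports Complex_Main "HOL-Library.Multiset"
begin

definition int_metric :: "'a set \<Rightarrow> ('a \<Rightarrow> 'a \<Rightarrow> nat) \<Rightarrow> bool" where
  "int_metric V w \<longleftrightarrow>
     (\<forall>u\<in>V. w u u = 0) \<and>
     (\<forall>u\<in>V. \<forall>v\<in>V. u \<noteq> v \<longrightarrow> w u v \<ge> 1) \<and>
     (\<forall>u\<in>V. \<forall>v\<in>V. w u v = w v u) \<and>
     (\<forall>u\<in>V. \<forall>v\<in>V. \<forall>x\<in>V. w u x \<le> w u v + w v x)"

definition G1 :: "'a set \<Rightarrow> ('a \<Rightarrow> 'a \<Rightarrow> nat) \<Rightarrow> 'a set set" where
  "G1 V w = {{u, v} | u v. u \<in> V \<and> v \<in> V \<and> u \<noteq> v \<and> w u v = 1}"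

definition adj :: "'a set set \<Rightarrow> ('a \<times> 'a) set" where
  "adj F = {(u, v). {u, v} \<in> F \<and> u \<noteq> v}"

definition gcomp :: "'a set set \<Rightarrow> 'a \<Rightarrow> 'a set" where
  "gcomp F x = {y. (x, y) \<in> (adj F)\<^sup>*}"

definition connected_graph :: "'a set \<Rightarrow> 'a set set \<Rightarrow> bool" where
  "connected_graph V F \<longleftrightarrow> (\<forall>x\<in>V. \<forall>y\<in>V. (x, y) \<in> (adj F)\<^sup>*)"

definition is_bridge :: "'a set set \<Rightarrow> 'a set \<Rightarrow> bool" where
  "is_bridge F e \<longleftrightarrow> e \<in> F \<and> (\<exists>a b. e = {a, b} \<and> a \<noteq> b \<and> b \<notin> gcomp (F - {e}) a)"

definition light_witness :: "'a set \<Rightarrow> ('a \<Rightarrow> 'a \<Rightarrow> nat) \<Rightarrow> nat \<Rightarrow> 'a \<Rightarrow> 'a set \<Rightarrow> bool" where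
  "light_witness V w l v e \<longleftrightarrow>
     v \<in> e \<and> is_bridge (G1 V w) e \<and> card (gcomp (G1 V w - {e}) v) \<le> l"

definition light :: "'a set \<Rightarrow> ('a \<Rightarrow> 'a \<Rightarrow> nat) \<Rightarrow> nat \<Rightarrow> 'a \<Rightarrow> bool" where
  "light V w l v \<longleftrightarrow> v \<in> V \<and> (\<exists>e. light_witness V w l v e)"

text \<open>Vertex set of S_v (the witness e_v is unique when l < n/2).\<close>
definition S :: "'a set \<Rightarrow> ('a \<Rightarrow> 'a \<Rightarrow> nat) \<Rightarrow> nat \<Rightarrow> 'a \<Rightarrow> 'a set" where
  "S V w l v = gcomp (G1 V w - {THE e. light_witness V w l v e}) v"

definition max_light :: "'a set \<Rightarrow> ('a \<Rightarrow> 'a \<Rightarrow> nat) \<Rightarrow> nat \<Rightarrow> 'a \<Rightarrow> bool" where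
  "max_light V w l v \<longleftrightarrow> light V w l v \<and>
     \<not> (\<exists>u. u \<noteq> v \<and> light V w l u \<and> v \<in> S V w l u)"

definition L :: "'a set \<Rightarrow> ('a \<Rightarrow> 'a \<Rightarrow> nat) \<Rightarrow> nat \<Rightarrow> 'a set" where
  "L V w l = {v. max_light V w l v}"

definition ordist :: "'a set \<Rightarrow> ('a \<Rightarrow> 'a \<Rightarrow> nat) \<Rightarrow> nat \<Rightarrow> 'a \<Rightarrow> 'a \<Rightarrow> nat" where
  "ordist V w l v u = Min {w u u' | u'. u' \<in> V - S V w l v}"

text \<open>Reconfigurations: multisets of unordered pairs, each pair represented by an
  ordered pair (u,u'); the induced multigraph is undirected (a loop counts twice in the degree).\<close>
definition mdeg :: "('a \<times> 'a) multiset \<Rightarrow> 'a \<Rightarrow> nat" where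
  "mdeg R u = size (filter_mset (\<lambda>p. fst p = u) R) + size (filter_mset (\<lambda>p. snd p = u) R)"

definition odd_vertices :: "'a set \<Rightarrow> ('a \<times> 'a) multiset \<Rightarrow> 'a set" where
  "odd_vertices X R = {u \<in> X. odd (mdeg R u)}"

definition is_reconf :: "'a set \<Rightarrow> ('a \<times> 'a) multiset \<Rightarrow> bool" where
  "is_reconf X R \<longleftrightarrow>
     (\<forall>p \<in># R. fst p \<in> X \<and> snd p \<in> X) \<and>
     (\<forall>x\<in>X. \<forall>y\<in>X. (x, y) \<in> (set_mset R \<union> (set_mset R)\<inverse>)\<^sup>*)"

definition rcost :: "'a set \<Rightarrow> ('a \<Rightarrow> 'a \<Rightarrow> nat) \<Rightarrow> nat \<Rightarrow> 'a \<Rightarrow> ('a \<times> 'a) multiset \<Rightarrow> real" where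
  "rcost V w l v R =
     real (\<Sum>p\<in>#R. w (fst p) (snd p))
     + (1/2) * real (\<Sum>u\<in>odd_vertices (S V w l v) R. ordist V w l v u)
     - (real (card (S V w l v)) - 1)"

definition rc :: "'a set \<Rightarrow> ('a \<Rightarrow> 'a \<Rightarrow> nat) \<Rightarrow> nat \<Rightarrow> 'a \<Rightarrow> real" where
  "rc V w l v = Inf {rcost V w l v R | R. is_reconf (S V w l v) R}"

definition tour_weight :: "('a \<Rightarrow> 'a \<Rightarrow> nat) \<Rightarrow> 'a list \<Rightarrow> nat" where
  "tour_weight w xs = (\<Sum>i<length xs. w (xs ! i) (xs ! ((i + 1) mod length xs)))"

definition TSP :: "'a set \<Rightarrow> ('a \<Rightarrow> 'a \<Rightarrow> nat) \<Rightarrow> nat" where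
  "TSP V w = Min {tour_weight w xs | xs. distinct xs \<and> set xs = V}"

end

theory Submission
  imports Defs
begin

definition symc :: "('a \<times> 'a) multiset \<Rightarrow> ('a \<times> 'a) set" where
  "symc R = set_mset R \<union> (set_mset R)\<inverse>"

lemma symc_plus: "symc (R + C) = symc R \<union> symc C"
  by (auto simp: symc_def)

lemma cross_edge:
  assumes "(x,y) \<in> G\<^sup>*" "x \<in> Q" "y \<notin> Q"
  shows "\<exists>a b. (a,b) \<in> G \<and> a \<in> Q \<and> b \<notin> Q"
  using assms by (induction rule: rtrancl_induct) auto

lemma connect:
  assumes "finite P" "pairwise disjnt P" "{} \<notin> P"
    "\<forall>Q\<in>P. \<forall>x\<in>Q. \<forall>y\<in>Q. (x,y) \<in> (symc R)\<^sup>*"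
    "\<forall>x\<in>\<Union>P. \<forall>y\<in>\<Union>P. (x,y) \<in> G\<^sup>*" "G \<subseteq> \<Union>P \<times> \<Union>P"
  shows "\<exists>C. size C \<le> card P - 1 \<and> set_mset C \<subseteq> G \<and>
           (\<forall>x\<in>\<Union>P. \<forall>y\<in>\<Union>P. (x,y) \<in> (symc (R + C))\<^sup>*)"
  using assms
proof (induction "card P" arbitrary: P R rule: less_induct)
  case less
  show ?case
  proof (cases "card P \<le> 1")
    case True
    then have eq: "\<forall>a\<in>P. \<forall>b\<in>P. a = b" using card_le_Suc0_iff_eq[OF less.prems(1)] by simp
    have "\<forall>x\<in>\<Union>P. \<forall>y\<in>\<Union>P. (x,y) \<in> (symc (R + {#}))\<^sup>*"
    proof (intro ballI)
      fix x y assume "x \<in> \<Union>P" "y \<in> \<Union>P"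
      then obtain Q1 Q2 where "Q1 \<in> P" "Q2 \<in> P" "x \<in> Q1" "y \<in> Q2" by auto
      with eq have "Q1 = Q2" by blast
      then show "(x,y) \<in> (symc (R + {#}))\<^sup>*" using less.prems(4) \<open>Q1 \<in> P\<close> \<open>x \<in> Q1\<close> \<open>y \<in> Q2\<close> by simp
    qed
    then show ?thesis by (intro exI[of _ "{#}"]) simp
  next
    case False
    then obtain Q1 Q2 where q: "Q1 \<in> P" "Q2 \<in> P" "Q1 \<noteq> Q2"
      by (metis card_le_Suc0_iff_eq less.prems(1) One_nat_def)
    obtain x where x: "x \<in> Q1" using q less.prems(3) by (metis all_not_in_conv)
    obtain y where y: "y \<in> Q2" using q less.prems(3) by (metis all_not_in_conv)
    have "y \<notin> Q1" using less.prems(2) q y unfolding pairwise_def disjnt_def by blast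
    have "(x,y) \<in> G\<^sup>*" using less.prems(5) x y q by blast
    then obtain a b where ab: "(a,b) \<in> G" "a \<in> Q1" "b \<notin> Q1"
      using cross_edge[OF _ x \<open>y \<notin> Q1\<close>] by blast
    then have "b \<in> \<Union>P" using less.prems(6) by blast
    then obtain Q' where Q': "Q' \<in> P" "b \<in> Q'" by blast
    have "Q' \<noteq> Q1" using Q' ab by blast
    define P' where "P' = insert (Q1 \<union> Q') (P - {Q1, Q'})"
    define R' where "R' = R + {#(a,b)#}"
    have notin: "Q1 \<union> Q' \<notin> P - {Q1, Q'}"
    proof
      assume "Q1 \<union> Q' \<in> P - {Q1, Q'}"
      then have "Q1 \<union> Q' \<in> P" "Q1 \<union> Q' \<noteq> Q1" by auto
      then have "disjnt Q1 (Q1 \<union> Q')" using less.prems(2) q unfolding pairwise_def by blast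
      then show False using x by (auto simp: disjnt_def)
    qed
    have cP: "card P \<ge> 2" using False by simp
    have cardP': "card P' = card P - 1"
      unfolding P'_def using cP notin less.prems(1) q(1) Q'(1) \<open>Q' \<noteq> Q1\<close>
      by (simp add: card_Diff_subset)
    have fin': "finite P'" unfolding P'_def using less.prems(1) by simp
    have U: "\<Union>P' = \<Union>P" unfolding P'_def using q(1) Q'(1) by blast
    have disj': "pairwise disjnt P'"
      unfolding P'_def pairwise_def disjnt_def
    proof (intro ballI impI)
      fix A B assume A: "A \<in> insert (Q1 \<union> Q') (P - {Q1, Q'})" and B: "B \<in> insert (Q1 \<union> Q') (P - {Q1, Q'})" and "A \<noteq> B"
      have d: "\<And>X Y. X \<in> P \<Longrightarrow> Y \<in> P \<Longrightarrow> X \<noteq> Y \<Longrightarrow> X \<inter> Y = {}"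
        using less.prems(2) unfolding pairwise_def disjnt_def by blast
      show "A \<inter> B = {}"
        using A B \<open>A \<noteq> B\<close> d[of Q1] d[of Q'] d[of A B] q(1) Q'(1) by auto
    qed
    have ne': "{} \<notin> P'" unfolding P'_def using less.prems(3) x by auto
    have sub: "symc R \<subseteq> symc R'" unfolding R'_def symc_plus by blast
    have abR: "(a,b) \<in> symc R'" "(b,a) \<in> symc R'" unfolding R'_def symc_def by auto
    have conn': "\<forall>Q\<in>P'. \<forall>x\<in>Q. \<forall>y\<in>Q. (x,y) \<in> (symc R')\<^sup>*"
    proof (intro ballI)
      fix Q u v assume "Q \<in> P'" "u \<in> Q" "v \<in> Q"
      have old: "\<And>Z u v. Z \<in> P \<Longrightarrow> u \<in> Z \<Longrightarrow> v \<in> Z \<Longrightarrow> (u,v) \<in> (symc R')\<^sup>*"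
        using less.prems(4) rtrancl_mono[OF sub] by blast
      show "(u,v) \<in> (symc R')\<^sup>*"
      proof (cases "Q = Q1 \<union> Q'")
        case False
        then have "Q \<in> P" using \<open>Q \<in> P'\<close> unfolding P'_def by auto
        then show ?thesis using old \<open>u \<in> Q\<close> \<open>v \<in> Q\<close> by blast
      next
        case True
        have 1: "(a,b) \<in> (symc R')\<^sup>*" "(b,a) \<in> (symc R')\<^sup>*" using abR by auto
        have "u \<in> Q1 \<or> u \<in> Q'" "v \<in> Q1 \<or> v \<in> Q'" using True \<open>u \<in> Q\<close> \<open>v \<in> Q\<close> by auto
        then show ?thesis
        proof (elim disjE)
          assume "u \<in> Q1" "v \<in> Q1" then show ?thesis using old q(1) by blast
        next
          assume "u \<in> Q'" "v \<in> Q'" then show ?thesis using old Q'(1) by blast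
        next
          assume "u \<in> Q1" "v \<in> Q'"
          then have "(u,a) \<in> (symc R')\<^sup>*" "(b,v) \<in> (symc R')\<^sup>*"
            using old q(1) Q' ab by blast+
          then show ?thesis using 1 by (meson rtrancl_trans)
        next
          assume "u \<in> Q'" "v \<in> Q1"
          then have "(u,b) \<in> (symc R')\<^sup>*" "(a,v) \<in> (symc R')\<^sup>*"
            using old q(1) Q' ab by blast+
          then show ?thesis using 1 by (meson rtrancl_trans)
        qed
      qed
    qed
    have "card P' < card P" using cardP' cP by simp
    from less.hyps[OF this fin' disj' ne' conn'] less.prems(5,6) U
    obtain C' where C': "size C' \<le> card P' - 1" "set_mset C' \<subseteq> G"
      "\<forall>x\<in>\<Union>P. \<forall>y\<in>\<Union>P. (x,y) \<in> (symc (R' + C'))\<^sup>*" by auto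
    show ?thesis
    proof (intro exI[of _ "add_mset (a,b) C'"] conjI)
      show "size (add_mset (a,b) C') \<le> card P - 1" using C'(1) cardP' cP by simp
      show "set_mset (add_mset (a,b) C') \<subseteq> G" using C'(2) ab by simp
      show "\<forall>x\<in>\<Union>P. \<forall>y\<in>\<Union>P. (x,y) \<in> (symc (R + add_mset (a,b) C'))\<^sup>*"
        using C'(3) unfolding R'_def by simp
    qed
  qed
qed

lemma symc_sym: "(x,y) \<in> (symc R)\<^sup>* \<Longrightarrow> (y,x) \<in> (symc R)\<^sup>*"
proof -
  assume "(x,y) \<in> (symc R)\<^sup>*"
  then have "(y,x) \<in> ((symc R)\<inverse>)\<^sup>*" by (simp add: rtrancl_converseI)
  moreover have "(symc R)\<inverse> = symc R" by (auto simp: symc_def)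
  ultimately show ?thesis by simp
qed

lemma walk:
  fixes f :: "nat \<Rightarrow> 'a"
  assumes "p < N" "f p \<in> B" "q < N" "f q \<notin> B"
  shows "\<exists>i<N. f i \<in> B \<and> f (Suc i mod N) \<notin> B \<and>
     (f p, f i) \<in> {(f j, f (Suc j mod N)) | j. j < N \<and> f j \<in> B \<and> f (Suc j mod N) \<in> B}\<^sup>*"
proof -
  define Rl where "Rl = {(f j, f (Suc j mod N)) | j. j < N \<and> f j \<in> B \<and> f (Suc j mod N) \<in> B}"
  define P where "P d = (f ((p + d) mod N) \<notin> B)" for d
  have "P (q + N - p)" unfolding P_def using assms by simp
  then have ex: "\<exists>d. P d" by blast
  define D where "D = (LEAST d. P d)"
  have PD: "P D" unfolding D_def using ex by (rule LeastI_ex)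
  have nP: "\<And>d. d < D \<Longrightarrow> \<not> P d" unfolding D_def using not_less_Least by blast
  have D0: "D \<noteq> 0" proof assume "D = 0" then show False using PD assms(1,2) unfolding P_def by simp qed
  have reach: "\<And>d. d < D \<Longrightarrow> (f p, f ((p + d) mod N)) \<in> Rl\<^sup>*"
  proof -
    fix d show "d < D \<Longrightarrow> (f p, f ((p + d) mod N)) \<in> Rl\<^sup>*"
    proof (induction d)
      case 0 then show ?case using assms(1) by simp
    next
      case (Suc d)
      then have IH: "(f p, f ((p + d) mod N)) \<in> Rl\<^sup>*" by simp
      have a: "f ((p + d) mod N) \<in> B" using nP[of d] Suc.prems unfolding P_def by simp
      have b: "f ((p + Suc d) mod N) \<in> B" using nP[of "Suc d"] Suc.prems unfolding P_def by simp
      have e: "Suc ((p + d) mod N) mod N = (p + Suc d) mod N" by (simp add: mod_Suc_eq)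
      have "(f ((p + d) mod N), f ((p + Suc d) mod N)) \<in> Rl"
        unfolding Rl_def using a b e assms(1)
        by (auto intro!: exI[of _ "(p + d) mod N"])
      with IH show ?case by (rule rtrancl_into_rtrancl)
    qed
  qed
  define i where "i = (p + (D - 1)) mod N"
  have "i < N" unfolding i_def using assms(1) by simp
  moreover have "f i \<in> B" using nP[of "D - 1"] D0 unfolding i_def P_def by simp
  moreover have "Suc i mod N = (p + D) mod N" unfolding i_def using D0
    by (simp add: mod_Suc_eq)
  then have "f (Suc i mod N) \<notin> B" using PD unfolding P_def by simp
  moreover have "(f p, f i) \<in> Rl\<^sup>*" unfolding i_def using reach[of "D - 1"] D0 by simp
  ultimately show ?thesis unfolding Rl_def by blast
qed

lemma mod_prev:
  assumes "i < N" "p < N"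
  shows "Suc i mod N = p \<longleftrightarrow> i = (p + N - 1) mod N"
proof (cases "Suc i < N")
  case True
  then show ?thesis using assms by (cases "p = 0") (auto simp: mod_if)
next
  case False
  then have "Suc i = N" using assms by simp
  then show ?thesis using assms by (cases "p = 0") (auto simp: mod_if)
qed

lemma edge_inj:
  assumes "distinct xs" "length xs = N" "3 \<le> N" "i < N" "j < N"
    "{xs!i, xs!(Suc i mod N)} = {xs!j, xs!(Suc j mod N)}"
  shows "i = j"
proof -
  have N0: "0 < N" using assms by simp
  have si: "Suc i mod N < N" "Suc j mod N < N" using N0 by auto
  have inj: "\<And>a b. a < N \<Longrightarrow> b < N \<Longrightarrow> xs!a = xs!b \<Longrightarrow> a = b"
    using assms(1,2) nth_eq_iff_index_eq by blast
  show ?thesis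
  proof (rule ccontr)
    assume "i \<noteq> j"
    then have "xs!i \<noteq> xs!j" using inj assms by blast
    then have "xs!i = xs!(Suc j mod N)" "xs!(Suc i mod N) = xs!j" using assms(6) by (auto simp: doubleton_eq_iff)
    then have "i = Suc j mod N" "Suc i mod N = j" using inj assms si by blast+
    then have "i = Suc (Suc i mod N) mod N" by simp
    then have "i = Suc (Suc i) mod N" by (simp add: mod_Suc_eq)
    then show False using assms(3,4) by (auto simp: mod_if split: if_splits)
  qed
qed

lemma arith_aux:
  fixes sz dz ii k a sc cp so scr dcr lone le de :: nat
  assumes "sz = dz + ii" "ii + k = a" "sc + 1 \<le> cp" "cp \<le> k" "so \<le> scr"
    "scr \<le> 2 * dcr + lone" "lone \<le> 1" "k \<le> de + le" "le \<le> lone" "de \<le> dcr" "1 \<le> dcr"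
  shows "2 * sz + 4 * sc + so + 2 \<le> 6 * dz + 6 * dcr + 2 * a"
proof -
  have 1: "4 * sc + 4 \<le> 4 * k" using assms(3,4) by linarith
  have 2: "so \<le> 2 * dcr + 1" using assms(5,6,7) by linarith
  have 3: "k \<le> dcr + 1" using assms(8,9,10,7) by linarith
  have "2 * sz + 4 * sc + so + 3 \<le> 2 * dz + 2 * ii + 4 * k + 2 * dcr"
    using 1 2 assms(1) by linarith
  also have "\<dots> = 2 * dz + 2 * a + 2 * k + 2 * dcr" using assms(2) by linarith
  also have "\<dots> \<le> 6 * dz + 6 * dcr + 2 * a + 1" using 3 assms(11) by linarith
  finally show ?thesis by linarith
qed

lemma perset:
  fixes xs :: "'a list" and A V :: "'a set" and w :: "'a \<Rightarrow> 'a \<Rightarrow> nat" and E :: "'a set"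
    and ord :: "'a \<Rightarrow> nat"
  assumes dist: "distinct xs" and setx: "set xs = V" and N3: "3 \<le> length xs"
    and met: "int_metric V w"
    and AV: "A \<subseteq> V" and z: "z \<in> V" "z \<notin> A" and a0: "a0 \<in> A"
    and Aconn: "\<forall>x\<in>A. \<forall>y\<in>A. (x,y) \<in> {(a,b). a\<in>A \<and> b\<in>A \<and> w a b = 1}\<^sup>*"
    and light: "\<forall>a\<in>A. \<forall>b\<in>V. b \<notin> A \<longrightarrow> w a b = 1 \<longrightarrow> {a,b} = E"
    and ordb: "\<forall>u\<in>A. \<forall>b\<in>V. b \<notin> A \<longrightarrow> ord u \<le> w u b"
  shows "\<exists>R. is_reconf A R \<and>
     real (\<Sum>p\<in>#R. w (fst p) (snd p)) + 1/2 * real (\<Sum>u\<in>odd_vertices A R. ord u)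
       - (real (card A) - 1)
     \<le> 3 * real (\<Sum>i<length xs. if xs!i \<in> A \<or> xs!(Suc i mod length xs) \<in> A
                     then w (xs!i) (xs!(Suc i mod length xs)) - 1 else 0)"
proof -
  define N where "N = length xs"
  define f where "f = (!) xs"
  define c where "c i = w (f i) (f (Suc i mod N))" for i
  define I0 where "I0 = {i. i < N \<and> f i \<in> A \<and> f (Suc i mod N) \<in> A}"
  define Ex where "Ex = {i. i < N \<and> f i \<in> A \<and> f (Suc i mod N) \<notin> A}"
  define Cr where "Cr = {i. i < N \<and> (f i \<in> A) \<noteq> (f (Suc i mod N) \<in> A)}"
  define R0 where "R0 = image_mset (\<lambda>i. (f i, f (Suc i mod N))) (mset_set I0)"
  define G where "G = {(a,b). a\<in>A \<and> b\<in>A \<and> w a b = 1}"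
  define comp where "comp a = {b \<in> A. (a,b) \<in> (symc R0)\<^sup>*}" for a
  define P where "P = comp ` A"
  have N0: "0 < N" "3 \<le> N" using N3 unfolding N_def by auto
  have finA: "finite A" using AV setx finite_subset by blast
  have fV: "\<And>i. i < N \<Longrightarrow> f i \<in> V" unfolding f_def N_def using setx by auto
  have finj: "\<And>a b. a < N \<Longrightarrow> b < N \<Longrightarrow> f a = f b \<Longrightarrow> a = b"
    unfolding f_def N_def using dist nth_eq_iff_index_eq by blast
  have pos: "\<And>x. x \<in> V \<Longrightarrow> \<exists>p<N. f p = x"
    unfolding f_def N_def using setx by (auto simp: in_set_conv_nth)
  have sN: "\<And>i. Suc i mod N < N" using N0 by simp
  have cge: "\<And>i. i < N \<Longrightarrow> 1 \<le> c i"
  proof -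
    fix i assume "i < N"
    have "Suc i mod N \<noteq> i"
    proof (cases "Suc i < N")
      case True then show ?thesis by simp
    next
      case False then have "Suc i = N" using \<open>i < N\<close> by simp
      then show ?thesis using N0 by simp
    qed
    then have "f i \<noteq> f (Suc i mod N)" using finj[OF \<open>i < N\<close> sN[of i]] by metis
    moreover have "\<forall>u\<in>V. \<forall>v\<in>V. u \<noteq> v \<longrightarrow> w u v \<ge> 1" using met unfolding int_metric_def by simp
    ultimately show "1 \<le> c i" unfolding c_def using fV[OF \<open>i < N\<close>] fV[OF sN[of i]] by simp
  qed
  have wsym: "\<And>a b. a \<in> V \<Longrightarrow> b \<in> V \<Longrightarrow> w a b = w b a" using met unfolding int_metric_def by simp
  have setR0: "set_mset R0 = {(f j, f (Suc j mod N)) | j. j < N \<and> f j \<in> A \<and> f (Suc j mod N) \<in> A}"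
    unfolding R0_def I0_def by auto
  have compsub: "\<And>a. comp a \<subseteq> A" unfolding comp_def by auto
  have compself: "\<And>a. a \<in> A \<Longrightarrow> a \<in> comp a" unfolding comp_def by auto
  have compeq: "\<And>a b. b \<in> comp a \<Longrightarrow> comp b = comp a"
  proof -
    fix a b assume "b \<in> comp a"
    then have ab: "(a,b) \<in> (symc R0)\<^sup>*" unfolding comp_def by auto
    then have ba: "(b,a) \<in> (symc R0)\<^sup>*" by (rule symc_sym)
    show "comp b = comp a" unfolding comp_def using ab ba by (auto intro: rtrancl_trans)
  qed
  have finP: "finite P" unfolding P_def using finA by simp
  have disjP: "pairwise disjnt P"
    unfolding pairwise_def disjnt_def P_def
  proof (intro ballI impI)
    fix X Y assume "X \<in> comp ` A" "Y \<in> comp ` A" "X \<noteq> Y"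
    then show "X \<inter> Y = {}" using compeq by blast
  qed
  have neP: "{} \<notin> P" unfolding P_def using compself by blast
  have UP: "\<Union>P = A" unfolding P_def using compsub compself by blast
  have connP: "\<forall>Q\<in>P. \<forall>x\<in>Q. \<forall>y\<in>Q. (x,y) \<in> (symc R0)\<^sup>*"
  proof (intro ballI)
    fix Q x y assume "Q \<in> P" "x \<in> Q" "y \<in> Q"
    then obtain a where "Q = comp a" unfolding P_def by blast
    then have "(a,x) \<in> (symc R0)\<^sup>*" "(a,y) \<in> (symc R0)\<^sup>*" using \<open>x \<in> Q\<close> \<open>y \<in> Q\<close> unfolding comp_def by auto
    then show "(x,y) \<in> (symc R0)\<^sup>*" by (meson symc_sym rtrancl_trans)
  qed
  have GA: "G \<subseteq> \<Union>P \<times> \<Union>P" unfolding UP G_def by auto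
  have Gconn: "\<forall>x\<in>\<Union>P. \<forall>y\<in>\<Union>P. (x,y) \<in> G\<^sup>*" unfolding UP G_def using Aconn by blast
  obtain C where C: "size C \<le> card P - 1" "set_mset C \<subseteq> G"
    "\<forall>x\<in>A. \<forall>y\<in>A. (x,y) \<in> (symc (R0 + C))\<^sup>*"
    using connect[OF finP disjP neP connP Gconn GA] UP by auto
  define R where "R = R0 + C + C"
  have rec1: "\<forall>p\<in>#R. fst p \<in> A \<and> snd p \<in> A"
  proof
    fix p assume "p \<in># R"
    then have "p \<in># R0 \<or> p \<in># C" unfolding R_def by auto
    then show "fst p \<in> A \<and> snd p \<in> A" using C(2) unfolding R0_def I0_def G_def by auto
  qed
  have rec2: "\<forall>x\<in>A. \<forall>y\<in>A. (x, y) \<in> (set_mset R \<union> (set_mset R)\<inverse>)\<^sup>*"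
  proof (intro ballI)
    fix x y assume "x \<in> A" "y \<in> A"
    then have "(x,y) \<in> (symc (R0 + C))\<^sup>*" using C(3) by blast
    moreover have "symc (R0 + C) = set_mset R \<union> (set_mset R)\<inverse>" unfolding R_def symc_def by auto
    ultimately show "(x, y) \<in> (set_mset R \<union> (set_mset R)\<inverse>)\<^sup>*" by simp
  qed
  have recR: "is_reconf A R" unfolding is_reconf_def using rec1 rec2 by blast
  have exit_of: "\<And>Q. Q \<in> P \<Longrightarrow> \<exists>i\<in>Ex. f i \<in> Q"
  proof -
    fix Q assume "Q \<in> P"
    then obtain a where a: "a \<in> A" "Q = comp a" unfolding P_def by blast
    obtain p where p: "p < N" "f p = a" using pos a AV by blast
    obtain q where q: "q < N" "f q = z" using pos z by blast
    obtain i where i: "i < N" "f i \<in> A" "f (Suc i mod N) \<notin> A"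
      "(f p, f i) \<in> {(f j, f (Suc j mod N)) | j. j < N \<and> f j \<in> A \<and> f (Suc j mod N) \<in> A}\<^sup>*"
      using walk[of p N f A q] p q a z by auto
    have sub: "{(f j, f (Suc j mod N)) | j. j < N \<and> f j \<in> A \<and> f (Suc j mod N) \<in> A} \<subseteq> symc R0"
      unfolding setR0[symmetric] symc_def by blast
    have "(a, f i) \<in> (symc R0)\<^sup>*" using rtrancl_mono[OF sub] i(4) p(2) by blast
    then have "f i \<in> Q" using a i unfolding comp_def by auto
    then show "\<exists>i\<in>Ex. f i \<in> Q" using i unfolding Ex_def by blast
  qed
  have finEx: "finite Ex" unfolding Ex_def by simp
  have cardPEx: "card P \<le> card Ex"
  proof -
    define g where "g Q = (SOME i. i \<in> Ex \<and> f i \<in> Q)" for Q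
    have g: "\<And>Q. Q \<in> P \<Longrightarrow> g Q \<in> Ex \<and> f (g Q) \<in> Q"
      unfolding g_def using exit_of by (metis (no_types, lifting) someI_ex)
    have "inj_on g P"
    proof (rule inj_onI)
      fix X Y assume "X \<in> P" "Y \<in> P" "g X = g Y"
      then have "f (g X) \<in> X \<inter> Y" using g[of X] g[of Y] by simp
      then show "X = Y" using disjP \<open>X \<in> P\<close> \<open>Y \<in> P\<close> unfolding pairwise_def disjnt_def by blast
    qed
    moreover have "g ` P \<subseteq> Ex" using g by auto
    ultimately show ?thesis using card_inj_on_le finEx by blast
  qed
  have cardP1: "1 \<le> card P" using finP a0 unfolding P_def by (auto simp: Suc_le_eq card_gt_0_iff)
  have cardI0: "card I0 + card Ex = card A"
  proof -
    have "{i. i < N \<and> f i \<in> A} = I0 \<union> Ex" "I0 \<inter> Ex = {}" unfolding I0_def Ex_def by auto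
    then have 1: "card {i. i < N \<and> f i \<in> A} = card I0 + card Ex"
      by (simp add: card_Un_disjoint I0_def Ex_def)
    have "f ` {i. i < N \<and> f i \<in> A} = A" using pos AV by force
    moreover have "inj_on f {i. i < N \<and> f i \<in> A}" using finj by (auto intro: inj_onI)
    ultimately have "card {i. i < N \<and> f i \<in> A} = card A" using card_image by fastforce
    with 1 show ?thesis by simp
  qed
  have mdeg_add: "\<And>M M' u. mdeg (M + M') u = mdeg M u + mdeg M' u"
    unfolding mdeg_def by simp
  have oddR: "odd_vertices A R = odd_vertices A R0"
  proof -
    have "\<And>u. mdeg R u = mdeg R0 u + 2 * mdeg C u" unfolding R_def mdeg_add by simp
    then show ?thesis unfolding odd_vertices_def by simp
  qed
  have finI0: "finite I0" unfolding I0_def by simp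
  have wR0: "(\<Sum>p\<in>#R0. w (fst p) (snd p)) = (\<Sum>i\<in>I0. c i)"
    unfolding R0_def c_def sum_unfold_sum_mset[of _ I0] by (simp add: multiset.map_comp o_def)
  have wC: "(\<Sum>p\<in>#C. w (fst p) (snd p)) = size C"
  proof -
    have "image_mset (\<lambda>p. w (fst p) (snd p)) C = image_mset (\<lambda>p. 1) C"
      using C(2) unfolding G_def by (intro image_mset_cong) auto
    then show ?thesis by simp
  qed
  have wR: "(\<Sum>p\<in>#R. w (fst p) (snd p)) = (\<Sum>i\<in>I0. c i) + 2 * size C"
    unfolding R_def using wR0 wC by simp
  define prv where "prv p = (p + N - 1) mod N" for p
  have prv: "\<And>i p. i < N \<Longrightarrow> p < N \<Longrightarrow> Suc i mod N = p \<longleftrightarrow> i = prv p"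
    unfolding prv_def using mod_prev by blast
  have prvN: "\<And>p. prv p < N" unfolding prv_def using N0 by simp
  have deg: "\<And>p. p < N \<Longrightarrow> mdeg R0 (f p) = (if p \<in> I0 then 1 else 0) + (if prv p \<in> I0 then 1 else 0)"
  proof -
    fix p assume p: "p < N"
    have 1: "{i \<in> I0. f i = f p} = (if p \<in> I0 then {p} else {})"
      using finj p unfolding I0_def by auto
    have 2: "{i \<in> I0. f (Suc i mod N) = f p} = (if prv p \<in> I0 then {prv p} else {})"
    proof -
      have "\<And>i. i \<in> I0 \<Longrightarrow> f (Suc i mod N) = f p \<longleftrightarrow> i = prv p"
      proof -
        fix i assume "i \<in> I0" then have "i < N" unfolding I0_def by simp
        then show "f (Suc i mod N) = f p \<longleftrightarrow> i = prv p"
          using finj[OF sN[of i] p] prv[OF \<open>i < N\<close> p] by metis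
      qed
      then show ?thesis by auto
    qed
    show "mdeg R0 (f p) = (if p \<in> I0 then 1 else 0) + (if prv p \<in> I0 then 1 else 0)"
      unfolding mdeg_def R0_def using 1 2 finI0
      by (simp add: filter_mset_image_mset)
  qed
  define ep where "ep i = (if f i \<in> A then f i else f (Suc i mod N))" for i
  have oddex: "\<And>u. u \<in> odd_vertices A R0 \<Longrightarrow> \<exists>i\<in>Cr. ep i = u \<and> ord u \<le> c i"
  proof -
    fix u assume u: "u \<in> odd_vertices A R0"
    then have uA: "u \<in> A" unfolding odd_vertices_def by simp
    obtain p where p: "p < N" "f p = u" using pos uA AV by blast
    have "odd (mdeg R0 (f p))" using u p unfolding odd_vertices_def by simp
    then have "p \<notin> I0 \<or> prv p \<notin> I0" using deg[OF p(1)] by auto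
    then show "\<exists>i\<in>Cr. ep i = u \<and> ord u \<le> c i"
    proof
      assume "p \<notin> I0"
      then have out: "f (Suc p mod N) \<notin> A" using p uA unfolding I0_def by auto
      then have "p \<in> Cr" "ep p = u" using p uA unfolding Cr_def ep_def by auto
      moreover have "ord u \<le> c p" unfolding c_def using ordb uA out fV[OF sN[of p]] p by auto
      ultimately show ?thesis by blast
    next
      assume "prv p \<notin> I0"
      have sp: "Suc (prv p) mod N = p" using prv[OF prvN p(1)] by simp
      then have out: "f (prv p) \<notin> A" using \<open>prv p \<notin> I0\<close> p uA prvN unfolding I0_def by auto
      then have "prv p \<in> Cr" "ep (prv p) = u" using p uA sp prvN unfolding Cr_def ep_def by auto
      moreover have "ord u \<le> c (prv p)" unfolding c_def sp
        using ordb uA out fV[OF prvN] p wsym[of "f (prv p)" u] fV[OF p(1)] by auto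
      ultimately show ?thesis by blast
    qed
  qed
  have finCr: "finite Cr" unfolding Cr_def by simp
  have CrN: "\<And>i. i \<in> Cr \<Longrightarrow> i < N" unfolding Cr_def by simp
  have sord: "(\<Sum>u\<in>odd_vertices A R0. ord u) \<le> (\<Sum>i\<in>Cr. c i)"
  proof -
    define Od where "Od = odd_vertices A R0"
    define g where "g u = (SOME i. i \<in> Cr \<and> ep i = u \<and> ord u \<le> c i)" for u
    have g: "\<And>u. u \<in> Od \<Longrightarrow> g u \<in> Cr \<and> ep (g u) = u \<and> ord u \<le> c (g u)"
    proof -
      fix u assume "u \<in> Od"
      then have "\<exists>i. i \<in> Cr \<and> ep i = u \<and> ord u \<le> c i" using oddex unfolding Od_def by blast
      then show "g u \<in> Cr \<and> ep (g u) = u \<and> ord u \<le> c (g u)" unfolding g_def by (rule someI_ex)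
    qed
    have inj: "inj_on g Od"
    proof (rule inj_onI)
      fix x y assume "x \<in> Od" "y \<in> Od" "g x = g y"
      have "x = ep (g x)" using g[OF \<open>x \<in> Od\<close>] by simp
      also have "\<dots> = ep (g y)" using \<open>g x = g y\<close> by simp
      also have "\<dots> = y" using g[OF \<open>y \<in> Od\<close>] by simp
      finally show "x = y" .
    qed
    have "(\<Sum>u\<in>Od. ord u) \<le> (\<Sum>u\<in>Od. c (g u))" by (rule sum_mono) (rule conjunct2[OF conjunct2[OF g]])
    also have "\<dots> = (\<Sum>i\<in>g ` Od. c i)" using sum.reindex[OF inj, of c] by (simp add: o_def)
    also have "\<dots> \<le> (\<Sum>i\<in>Cr. c i)"
    proof (rule sum_mono2[OF finCr])
      show "g ` Od \<subseteq> Cr" using g by blast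
    qed simp
    finally show ?thesis unfolding Od_def .
  qed
  have lightE: "\<And>i. i \<in> Cr \<Longrightarrow> c i = 1 \<Longrightarrow> {f i, f (Suc i mod N)} = E"
  proof -
    fix i assume i: "i \<in> Cr" "c i = 1"
    have iN: "i < N" using CrN i by simp
    show "{f i, f (Suc i mod N)} = E"
    proof (cases "f i \<in> A")
      case True
      then have out: "f (Suc i mod N) \<notin> A" using i unfolding Cr_def by auto
      have "w (f i) (f (Suc i mod N)) = 1" using i(2) unfolding c_def .
      then show ?thesis using light[rule_format, OF True fV[OF sN[of i]] out] by simp
    next
      case False
      then have A1: "f (Suc i mod N) \<in> A" using i unfolding Cr_def by auto
      have "w (f (Suc i mod N)) (f i) = 1" using i(2) wsym[OF fV[OF iN] fV[OF sN[of i]]] unfolding c_def by simp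
      then have "{f (Suc i mod N), f i} = E" using light[rule_format, OF A1 fV[OF iN] False] by simp
      then show ?thesis by (simp add: insert_commute)
    qed
  qed
  have light1: "card {i\<in>Cr. c i = 1} \<le> 1"
  proof -
    have "\<forall>a\<in>{i\<in>Cr. c i = 1}. \<forall>b\<in>{i\<in>Cr. c i = 1}. a = b"
    proof (intro ballI)
      fix a b assume "a \<in> {i\<in>Cr. c i = 1}" "b \<in> {i\<in>Cr. c i = 1}"
      then have "{f a, f (Suc a mod N)} = {f b, f (Suc b mod N)}" "a < N" "b < N"
        using lightE CrN by auto
      then show "a = b" using edge_inj[OF dist N_def[symmetric] N0(2)] unfolding f_def by blast
    qed
    then show ?thesis using finCr by (simp add: card_le_Suc0_iff_eq)
  qed
  have heavy: "\<exists>i\<in>Cr. 2 \<le> c i"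
  proof -
    obtain p where p: "p < N" "f p = a0" using pos a0 AV by blast
    obtain q where q: "q < N" "f q = z" using pos z by blast
    obtain i where i: "i < N" "f i \<in> A" "f (Suc i mod N) \<notin> A"
      using walk[of p N f A q] p q a0 z by auto
    obtain j where j: "j < N" "f j \<in> V - A" "f (Suc j mod N) \<notin> V - A"
      using walk[of q N f "V - A" p] p q a0 z AV by auto
    have j2: "f (Suc j mod N) \<in> A" using j(3) fV[OF sN[of j]] by simp
    have "i \<in> Cr" "j \<in> Cr" using i j j2 unfolding Cr_def by auto
    moreover have "i \<noteq> j" using i j by auto
    ultimately have "\<not> (c i = 1 \<and> c j = 1)" using light1 finCr
      by (auto simp: card_le_Suc0_iff_eq)
    then have "c i \<noteq> 1 \<or> c j \<noteq> 1" by simp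
    then show ?thesis using cge[OF i(1)] cge[OF j(1)] \<open>i \<in> Cr\<close> \<open>j \<in> Cr\<close> by force
  qed
  have ExCr: "Ex \<subseteq> Cr" unfolding Ex_def Cr_def by auto
  have I0N: "\<And>i. i \<in> I0 \<Longrightarrow> i < N" unfolding I0_def by simp
  have ExN: "\<And>i. i \<in> Ex \<Longrightarrow> i < N" unfolding Ex_def by simp
  have S0: "(\<Sum>i\<in>I0. c i) = (\<Sum>i\<in>I0. c i - 1) + card I0"
  proof -
    have "(\<Sum>i\<in>I0. c i) = (\<Sum>i\<in>I0. (c i - 1) + 1)"
    proof (rule sum.cong[OF refl])
      fix i assume "i \<in> I0" then have "1 \<le> c i" using cge I0N by blast
      then show "c i = c i - 1 + 1" by simp
    qed
    also have "\<dots> = (\<Sum>i\<in>I0. c i - 1) + (\<Sum>i\<in>I0. 1)" by (rule sum.distrib)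
    finally show ?thesis by simp
  qed
  have cnt: "\<And>X. finite X \<Longrightarrow> (\<Sum>i\<in>X. if c i = 1 then 1 else 0) = card {i\<in>X. c i = 1}"
    by (simp add: sum.inter_filter[symmetric])
  have SCr: "(\<Sum>i\<in>Cr. c i) \<le> 2 * (\<Sum>i\<in>Cr. c i - 1) + card {i\<in>Cr. c i = 1}"
  proof -
    have "(\<Sum>i\<in>Cr. c i) \<le> (\<Sum>i\<in>Cr. 2 * (c i - 1) + (if c i = 1 then 1 else 0))"
    proof (rule sum_mono)
      fix i assume "i \<in> Cr" then have "1 \<le> c i" using cge CrN by blast
      show "c i \<le> 2 * (c i - 1) + (if c i = 1 then 1 else 0)"
      proof (cases "c i = 1")
        case True then show ?thesis by simp
      next
        case False
        with \<open>1 \<le> c i\<close> have "c i \<le> 2 * (c i - 1)" by linarith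
        then show ?thesis using False by simp
      qed
    qed
    also have "\<dots> = 2 * (\<Sum>i\<in>Cr. c i - 1) + card {i\<in>Cr. c i = 1}"
      using cnt[OF finCr] by (simp add: sum.distrib sum_distrib_left)
    finally show ?thesis .
  qed
  have cEx: "card Ex \<le> (\<Sum>i\<in>Ex. c i - 1) + card {i\<in>Ex. c i = 1}"
  proof -
    have "card Ex = (\<Sum>i\<in>Ex. 1::nat)" by simp
    also have "\<dots> \<le> (\<Sum>i\<in>Ex. (c i - 1) + (if c i = 1 then 1 else 0))"
    proof (rule sum_mono)
      fix i assume "i \<in> Ex" then have "1 \<le> c i" using cge ExN by blast
      then show "(1::nat) \<le> (c i - 1) + (if c i = 1 then 1 else 0)" by (cases "c i = 1") simp_all
    qed
    also have "\<dots> = (\<Sum>i\<in>Ex. c i - 1) + card {i\<in>Ex. c i = 1}"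
      using cnt[OF finEx] by (simp add: sum.distrib)
    finally show ?thesis .
  qed
  have LEx: "card {i\<in>Ex. c i = 1} \<le> card {i\<in>Cr. c i = 1}"
    using ExCr finCr by (intro card_mono) auto
  have DEx: "(\<Sum>i\<in>Ex. c i - 1) \<le> (\<Sum>i\<in>Cr. c i - 1)"
    using ExCr finCr by (intro sum_mono2) auto
  have DCr1: "1 \<le> (\<Sum>i\<in>Cr. c i - 1)"
  proof -
    obtain i where "i \<in> Cr" "2 \<le> c i" using heavy by blast
    then have "c i - 1 \<le> (\<Sum>i\<in>Cr. c i - 1)" using finCr by (intro member_le_sum) auto
    then show ?thesis using \<open>2 \<le> c i\<close> by simp
  qed
  have Xeq: "(\<Sum>i<length xs. if xs!i \<in> A \<or> xs!(Suc i mod length xs) \<in> A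
                     then w (xs!i) (xs!(Suc i mod length xs)) - 1 else 0)
     = (\<Sum>i\<in>I0. c i - 1) + (\<Sum>i\<in>Cr. c i - 1)"
  proof -
    have "(\<Sum>i<length xs. if xs!i \<in> A \<or> xs!(Suc i mod length xs) \<in> A
                     then w (xs!i) (xs!(Suc i mod length xs)) - 1 else 0)
        = (\<Sum>i\<in>{i\<in>{..<N}. f i \<in> A \<or> f (Suc i mod N) \<in> A}. c i - 1)"
      unfolding f_def N_def c_def by (subst sum.inter_filter) simp_all
    also have "{i\<in>{..<N}. f i \<in> A \<or> f (Suc i mod N) \<in> A} = I0 \<union> Cr"
      unfolding I0_def Cr_def by auto
    also have "(\<Sum>i\<in>I0 \<union> Cr. c i - 1) = (\<Sum>i\<in>I0. c i - 1) + (\<Sum>i\<in>Cr. c i - 1)"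
      using finI0 finCr by (intro sum.union_disjoint) (auto simp: I0_def Cr_def)
    finally show ?thesis .
  qed
  have sC: "size C + 1 \<le> card P" using C(1) cardP1 by simp
  show ?thesis
  proof (intro exI conjI)
    show "is_reconf A R" by (rule recR)
    show "real (\<Sum>p\<in>#R. w (fst p) (snd p)) + 1/2 * real (\<Sum>u\<in>odd_vertices A R. ord u)
       - (real (card A) - 1)
     \<le> 3 * real (\<Sum>i<length xs. if xs!i \<in> A \<or> xs!(Suc i mod length xs) \<in> A
                     then w (xs!i) (xs!(Suc i mod length xs)) - 1 else 0)"
    proof -
      have h: "2 * (\<Sum>i\<in>I0. c i) + 4 * size C + (\<Sum>u\<in>odd_vertices A R0. ord u) + 2
            \<le> 6 * (\<Sum>i\<in>I0. c i - 1) + 6 * (\<Sum>i\<in>Cr. c i - 1) + 2 * card A"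
        by (rule arith_aux[OF S0 cardI0 sC cardPEx sord SCr light1 cEx LEx DEx DCr1])
      then have "real (2 * (\<Sum>i\<in>I0. c i) + 4 * size C + (\<Sum>u\<in>odd_vertices A R0. ord u) + 2)
            \<le> real (6 * (\<Sum>i\<in>I0. c i - 1) + 6 * (\<Sum>i\<in>Cr. c i - 1) + 2 * card A)"
        by (rule of_nat_mono)
      then show ?thesis unfolding wR oddR Xeq by simp
    qed
  qed
qed

lemma adj_sym: "(u,v) \<in> adj F \<Longrightarrow> (v,u) \<in> adj F"
  unfolding adj_def by (auto simp: insert_commute)

lemma adj_rsym: "(u,v) \<in> (adj F)\<^sup>* \<Longrightarrow> (v,u) \<in> (adj F)\<^sup>*"
proof -
  assume "(u,v) \<in> (adj F)\<^sup>*"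
  then have "(v,u) \<in> ((adj F)\<inverse>)\<^sup>*" by (simp add: rtrancl_converseI)
  moreover have "(adj F)\<inverse> = adj F" using adj_sym by auto
  ultimately show ?thesis by simp
qed

lemma gcomp_sym: "y \<in> gcomp F x \<Longrightarrow> x \<in> gcomp F y"
  unfolding gcomp_def by (simp add: adj_rsym)

lemma gcomp_trans: "y \<in> gcomp F x \<Longrightarrow> z \<in> gcomp F y \<Longrightarrow> z \<in> gcomp F x"
  unfolding gcomp_def by (simp add: rtrancl_trans[of x y])

lemma gcomp_self: "x \<in> gcomp F x" unfolding gcomp_def by simp

lemma gcomp_step: "y \<in> gcomp F x \<Longrightarrow> {y,z} \<in> F \<Longrightarrow> y \<noteq> z \<Longrightarrow> z \<in> gcomp F x"
proof -
  assume "y \<in> gcomp F x" "{y,z} \<in> F" "y \<noteq> z"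
  then have "(x,y) \<in> (adj F)\<^sup>*" "(y,z) \<in> adj F" unfolding gcomp_def adj_def by auto
  then have "(x,z) \<in> (adj F)\<^sup>*" by (rule rtrancl_into_rtrancl)
  then show ?thesis unfolding gcomp_def by simp
qed

lemma G1_edge: "e \<in> G1 V w \<Longrightarrow> int_metric V w \<Longrightarrow> \<exists>a b. e = {a,b} \<and> a \<in> V \<and> b \<in> V \<and> a \<noteq> b \<and> w a b = 1"
  unfolding G1_def by auto

lemma G1_pair:
  assumes "{a,b} \<in> G1 V w" "int_metric V w"
  shows "a \<in> V \<and> b \<in> V \<and> w a b = 1"
proof -
  obtain u v where uv: "{a,b} = {u,v}" "u \<in> V" "v \<in> V" "w u v = 1"
    using assms(1) unfolding G1_def by blast
  have sym: "w u v = w v u" using assms(2) uv(2,3) unfolding int_metric_def by simp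
  from uv(1) have "(a = u \<and> b = v) \<or> (a = v \<and> b = u)" by (auto simp: doubleton_eq_iff)
  then show ?thesis using uv sym by auto
qed

lemma adj_G1: "(u,v) \<in> adj F \<Longrightarrow> F \<subseteq> G1 V w \<Longrightarrow> int_metric V w \<Longrightarrow> u \<in> V \<and> v \<in> V \<and> w u v = 1"
  unfolding adj_def using G1_pair[of u v V w] by blast

lemma gcomp_V: "F \<subseteq> G1 V w \<Longrightarrow> int_metric V w \<Longrightarrow> x \<in> V \<Longrightarrow> gcomp F x \<subseteq> V"
proof
  fix y assume F: "F \<subseteq> G1 V w" and m: "int_metric V w" and x: "x \<in> V" and "y \<in> gcomp F x"
  then have "(x,y) \<in> (adj F)\<^sup>*" unfolding gcomp_def by simp
  then show "y \<in> V"
  proof (induction rule: rtrancl_induct)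
    case base show ?case using x .
  next
    case (step y z) then show ?case using adj_G1[OF step(2) F m] by simp
  qed
qed

lemma bridge_other:
  assumes "is_bridge F e" "v \<in> e"
  shows "\<exists>x. e = {v,x} \<and> x \<noteq> v \<and> x \<notin> gcomp (F - {e}) v"
proof -
  obtain a b where ab: "e = {a,b}" "a \<noteq> b" "b \<notin> gcomp (F - {e}) a"
    using assms(1) unfolding is_bridge_def by blast
  show ?thesis
  proof (cases "v = a")
    case True then show ?thesis using ab by (intro exI[of _ b]) simp
  next
    case False
    then have vb: "v = b" using assms(2) ab(1) by simp
    have "a \<notin> gcomp (F - {e}) b" using ab(3) gcomp_sym by metis
    moreover have "e = {b,a}" using ab(1) by (simp add: insert_commute)
    ultimately show ?thesis using ab(2) vb by (intro exI[of _ a]) simp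
  qed
qed

lemma reach_cross:
  assumes "(x,y) \<in> G\<^sup>*" "x \<in> Q"
  shows "y \<notin> Q \<Longrightarrow> \<exists>a b. (x,a) \<in> G\<^sup>* \<and> (a,b) \<in> G \<and> a \<in> Q \<and> b \<notin> Q"
  using assms(1)
proof (induction rule: rtrancl_induct)
  case base then show ?case using assms(2) by simp
next
  case (step y z)
  show ?case
  proof (cases "y \<in> Q")
    case True
    have "(x,y) \<in> G\<^sup>* \<and> (y,z) \<in> G \<and> y \<in> Q \<and> z \<notin> Q" using step.hyps True step.prems by simp
    then show ?thesis by blast
  next
    case False then show ?thesis using step.IH by simp
  qed
qed

lemma lw_props:
  assumes "light_witness V w l v e" "int_metric V w"
  shows "e \<in> G1 V w" "v \<in> V" "gcomp (G1 V w - {e}) v \<subseteq> V" "card (gcomp (G1 V w - {e}) v) \<le> l"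
    "\<exists>x. e = {v,x} \<and> x \<noteq> v \<and> x \<notin> gcomp (G1 V w - {e}) v"
proof -
  show e: "e \<in> G1 V w" using assms(1) unfolding light_witness_def is_bridge_def by simp
  have "v \<in> e" using assms(1) unfolding light_witness_def by simp
  then show vV: "v \<in> V" using G1_edge[OF e assms(2)] by auto
  show "gcomp (G1 V w - {e}) v \<subseteq> V" using gcomp_V[OF _ assms(2) vV] by blast
  show "card (gcomp (G1 V w - {e}) v) \<le> l" using assms(1) unfolding light_witness_def by simp
  show "\<exists>x. e = {v,x} \<and> x \<noteq> v \<and> x \<notin> gcomp (G1 V w - {e}) v"
    using bridge_other[of "G1 V w" e v] assms(1) \<open>v \<in> e\<close> unfolding light_witness_def by blast
qed

lemma uniq_step:
  assumes m: "int_metric V w" and lw: "light_witness V w l v e1" and ne: "e1 \<noteq> e2" and v2: "v \<in> e2"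
    and y: "y \<in> gcomp (G1 V w - {e1}) v" and yz: "{y,z} \<in> G1 V w" "y \<noteq> z"
  shows "z \<in> gcomp (G1 V w - {e1}) v \<union> gcomp (G1 V w - {e2}) v"
proof (cases "{y,z} = e1")
  case False
  then have "{y,z} \<in> G1 V w - {e1}" using yz by simp
  then show ?thesis using gcomp_step[OF y _ yz(2)] by blast
next
  case True
  obtain x where x: "e1 = {v,x}" "x \<noteq> v" "x \<notin> gcomp (G1 V w - {e1}) v"
    using lw_props(5)[OF lw m] by blast
  have "y \<noteq> x" using x(3) y by blast
  have "y \<in> {v,x}" using True x(1) by (metis insertI1)
  then have "y = v" using \<open>y \<noteq> x\<close> by simp
  have "{v,z} \<in> G1 V w - {e2}" using True \<open>y = v\<close> lw_props(1)[OF lw m] ne by simp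
  moreover have "v \<noteq> z" using \<open>y = v\<close> yz(2) by simp
  ultimately have "z \<in> gcomp (G1 V w - {e2}) v" by (rule gcomp_step[OF gcomp_self])
  then show ?thesis by blast
qed

lemma witness_unique:
  assumes fin: "finite V" and cV: "card V = n" and m: "int_metric V w"
    and con: "connected_graph V (G1 V w)" and ln: "2 * l < n"
    and lw1: "light_witness V w l v e1" and lw2: "light_witness V w l v e2"
  shows "e1 = e2"
proof (rule ccontr)
  assume ne: "e1 \<noteq> e2"
  define C1 where "C1 = gcomp (G1 V w - {e1}) v"
  define C2 where "C2 = gcomp (G1 V w - {e2}) v"
  have v1: "v \<in> e1" using lw1 unfolding light_witness_def by simp
  have v2: "v \<in> e2" using lw2 unfolding light_witness_def by simp
  have vV: "v \<in> V" using lw_props(2)[OF lw1 m] .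
  have cover: "V \<subseteq> C1 \<union> C2"
  proof
    fix z assume "z \<in> V"
    then have "(v,z) \<in> (adj (G1 V w))\<^sup>*" using con vV unfolding connected_graph_def by blast
    then show "z \<in> C1 \<union> C2"
    proof (induction rule: rtrancl_induct)
      case base show ?case unfolding C1_def using gcomp_self[of v] by (rule UnI1)
    next
      case (step y z)
      have yz: "{y,z} \<in> G1 V w" "y \<noteq> z" using step(2) unfolding adj_def by auto
      show ?case
      proof (cases "y \<in> C1")
        case True
        then show ?thesis using uniq_step[OF m lw1 ne v2 _ yz] unfolding C1_def C2_def by blast
      next
        case False
        then have "y \<in> C2" using step(3) by blast
        then show ?thesis using uniq_step[OF m lw2 ne[symmetric] v1 _ yz] unfolding C1_def C2_def by blast
      qed
    qed
  qed
  have s1: "C1 \<subseteq> V" "card C1 \<le> l" using lw_props(3,4)[OF lw1 m] unfolding C1_def by auto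
  have s2: "C2 \<subseteq> V" "card C2 \<le> l" using lw_props(3,4)[OF lw2 m] unfolding C2_def by auto
  have "finite C1" "finite C2" using s1 s2 fin finite_subset by blast+
  then have "card V \<le> card (C1 \<union> C2)" using cover by (intro card_mono) auto
  also have "\<dots> \<le> card C1 + card C2" by (rule card_Un_le)
  finally show False using s1 s2 cV ln by linarith
qed

locale setting =
  fixes V :: "'a set" and w :: "'a \<Rightarrow> 'a \<Rightarrow> nat" and n l :: nat
  assumes fin: "finite V" and cV: "card V = n" and m: "int_metric V w"
    and con: "connected_graph V (G1 V w)" and ln: "2 * l < n"
begin

lemma L_witness:
  assumes "v \<in> L V w l"
  shows "\<exists>e. light_witness V w l v e \<and> S V w l v = gcomp (G1 V w - {e}) v"
proof -
  have "light V w l v" using assms unfolding L_def max_light_def by simp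
  then obtain e where e: "light_witness V w l v e" unfolding light_def by blast
  have "(THE e. light_witness V w l v e) = e"
  proof (rule the_equality)
    show "light_witness V w l v e" by (rule e)
    fix x assume "light_witness V w l v x"
    then show "x = e" using witness_unique[OF fin cV m con ln _ e] by blast
  qed
  then have "S V w l v = gcomp (G1 V w - {e}) v" unfolding S_def by simp
  then show ?thesis using e by blast
qed

lemma S_basic:
  assumes "v \<in> L V w l"
  shows "S V w l v \<subseteq> V" "v \<in> S V w l v" "card (S V w l v) \<le> l" "finite (S V w l v)"
proof -
  obtain e where e: "light_witness V w l v e" "S V w l v = gcomp (G1 V w - {e}) v"
    using L_witness[OF assms] by blast
  show 1: "S V w l v \<subseteq> V" using lw_props(3)[OF e(1) m] e(2) by simp
  show "v \<in> S V w l v" using e(2) gcomp_self by simp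
  show "card (S V w l v) \<le> l" using lw_props(4)[OF e(1) m] e(2) by simp
  show "finite (S V w l v)" using 1 fin finite_subset by blast
qed

lemma S_out:
  assumes "v \<in> L V w l"
  shows "\<exists>z\<in>V. z \<notin> S V w l v"
proof (rule ccontr)
  assume "\<not> ?thesis"
  then have "V \<subseteq> S V w l v" by blast
  then have "card V \<le> card (S V w l v)" using S_basic(4)[OF assms] by (rule card_mono[rotated])
  then show False using S_basic(3)[OF assms] cV ln by linarith
qed

lemma S_conn:
  assumes "v \<in> L V w l"
  shows "\<forall>x\<in>S V w l v. \<forall>y\<in>S V w l v.
     (x,y) \<in> {(a,b). a\<in>S V w l v \<and> b\<in>S V w l v \<and> w a b = 1}\<^sup>*"
proof -
  obtain e where e: "light_witness V w l v e" "S V w l v = gcomp (G1 V w - {e}) v"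
    using L_witness[OF assms] by blast
  define A where "A = S V w l v"
  define GA where "GA = {(a,b). a\<in>A \<and> b\<in>A \<and> w a b = 1}"
  have sub: "G1 V w - {e} \<subseteq> G1 V w" by blast
  have fromv: "\<And>x. x \<in> A \<Longrightarrow> (v,x) \<in> GA\<^sup>*"
  proof -
    fix x assume "x \<in> A"
    then have "(v,x) \<in> (adj (G1 V w - {e}))\<^sup>*" unfolding A_def e(2) gcomp_def by simp
    then show "(v,x) \<in> GA\<^sup>*"
    proof (induction rule: rtrancl_induct)
      case base show ?case by simp
    next
      case (step y z)
      have yA: "y \<in> A" unfolding A_def e(2) gcomp_def using step(1) by simp
      have zA: "z \<in> A" unfolding A_def e(2) gcomp_def using step(1,2) by (simp add: rtrancl_into_rtrancl)
      have "w y z = 1" using adj_G1[OF step(2) sub m] by simp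
      then have "(y,z) \<in> GA" unfolding GA_def using yA zA by simp
      then show ?case using step(3) by (rule rtrancl_into_rtrancl[rotated])
    qed
  qed
  have GAsym: "GA\<inverse> = GA"
  proof -
    have "\<And>a b. a \<in> A \<Longrightarrow> b \<in> A \<Longrightarrow> w a b = w b a"
      using S_basic(1)[OF assms] m unfolding A_def int_metric_def by blast
    then show ?thesis unfolding GA_def by auto
  qed
  have tov: "\<And>x. x \<in> A \<Longrightarrow> (x,v) \<in> GA\<^sup>*"
  proof -
    fix x assume "x \<in> A"
    then have "(x,v) \<in> (GA\<inverse>)\<^sup>*" using fromv by (simp add: rtrancl_converseI)
    then show "(x,v) \<in> GA\<^sup>*" using GAsym by simp
  qed
  show ?thesis unfolding A_def[symmetric] GA_def[symmetric]
    using tov fromv by (meson rtrancl_trans)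
qed

lemma S_light:
  assumes "v \<in> L V w l"
  shows "\<exists>E. \<forall>a\<in>S V w l v. \<forall>b\<in>V. b \<notin> S V w l v \<longrightarrow> w a b = 1 \<longrightarrow> {a,b} = E"
proof -
  obtain e where e: "light_witness V w l v e" "S V w l v = gcomp (G1 V w - {e}) v"
    using L_witness[OF assms] by blast
  have "\<forall>a\<in>S V w l v. \<forall>b\<in>V. b \<notin> S V w l v \<longrightarrow> w a b = 1 \<longrightarrow> {a,b} = e"
  proof (intro ballI impI)
    fix a b assume a: "a \<in> S V w l v" and b: "b \<in> V" "b \<notin> S V w l v" and wab: "w a b = 1"
    have aV: "a \<in> V" using a S_basic(1)[OF assms] by blast
    have ab: "a \<noteq> b" using a b by blast
    have G: "{a,b} \<in> G1 V w" unfolding G1_def using aV b(1) ab wab by blast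
    show "{a,b} = e"
    proof (rule ccontr)
      assume "{a,b} \<noteq> e"
      then have "{a,b} \<in> G1 V w - {e}" using G by simp
      then have "b \<in> gcomp (G1 V w - {e}) v" using gcomp_step[of a "G1 V w - {e}" v b] a e(2) ab by simp
      then show False using b e(2) by simp
    qed
  qed
  then show ?thesis by blast
qed

lemma S_ord:
  assumes "v \<in> L V w l"
  shows "\<forall>u\<in>S V w l v. \<forall>b\<in>V. b \<notin> S V w l v \<longrightarrow> ordist V w l v u \<le> w u b"
proof (intro ballI impI)
  fix u b assume "u \<in> S V w l v" "b \<in> V" "b \<notin> S V w l v"
  have eq: "{w u u' | u'. u' \<in> V - S V w l v} = (\<lambda>u'. w u u') ` (V - S V w l v)" by auto
  have "finite {w u u' | u'. u' \<in> V - S V w l v}" unfolding eq using fin by simp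
  moreover have "w u b \<in> {w u u' | u'. u' \<in> V - S V w l v}" using \<open>b \<in> V\<close> \<open>b \<notin> S V w l v\<close> by blast
  ultimately show "ordist V w l v u \<le> w u b" unfolding ordist_def by (rule Min_le)
qed

lemma S_disj:
  assumes u: "u \<in> L V w l" and v: "v \<in> L V w l" and uv: "u \<noteq> v"
  shows "S V w l u \<inter> S V w l v = {}"
proof (rule ccontr)
  assume "S V w l u \<inter> S V w l v \<noteq> {}"
  then obtain y where y: "y \<in> S V w l u" "y \<in> S V w l v" by blast
  obtain eu where eu: "light_witness V w l u eu" "S V w l u = gcomp (G1 V w - {eu}) u"
    using L_witness[OF u] by blast
  obtain ev where ev: "light_witness V w l v ev" "S V w l v = gcomp (G1 V w - {ev}) v"
    using L_witness[OF v] by blast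
  have lu: "light V w l u" using u unfolding L_def max_light_def by simp
  have lv: "light V w l v" using v unfolding L_def max_light_def by simp
  have nv: "\<not> (\<exists>u'. u' \<noteq> v \<and> light V w l u' \<and> v \<in> S V w l u')" using v unfolding L_def max_light_def by simp
  have nu: "\<not> (\<exists>u'. u' \<noteq> u \<and> light V w l u' \<and> u \<in> S V w l u')" using u unfolding L_def max_light_def by simp
  have vnu: "v \<notin> S V w l u"
  proof
    assume "v \<in> S V w l u"
    then have "u \<noteq> v \<and> light V w l u \<and> v \<in> S V w l u" using lu uv by simp
    then show False using nv by blast
  qed
  have unv: "u \<notin> S V w l v"
  proof
    assume "u \<in> S V w l v"
    then have "v \<noteq> u \<and> light V w l v \<and> u \<in> S V w l v" using lv uv by simp
    then show False using nu by blast
  qed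
  have "(v,y) \<in> (adj (G1 V w - {ev}))\<^sup>*" using y(2) ev(2) unfolding gcomp_def by simp
  then have "(y,v) \<in> (adj (G1 V w - {ev}))\<^sup>*" by (rule adj_rsym)
  then obtain a b where ab: "(y,a) \<in> (adj (G1 V w - {ev}))\<^sup>*" "(a,b) \<in> adj (G1 V w - {ev})"
    "a \<in> S V w l u" "b \<notin> S V w l u"
    using reach_cross[OF \<open>(y,v) \<in> _\<close> y(1) vnu] by blast
  have aSv: "a \<in> S V w l v"
  proof -
    have "(v,y) \<in> (adj (G1 V w - {ev}))\<^sup>*" using y(2) ev(2) unfolding gcomp_def by simp
    then have "(v,a) \<in> (adj (G1 V w - {ev}))\<^sup>*" using ab(1) by (rule rtrancl_trans)
    then show ?thesis using ev(2) unfolding gcomp_def by simp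
  qed
  have abG: "{a,b} \<in> G1 V w" "a \<noteq> b" using ab(2) unfolding adj_def by auto
  have "{a,b} = eu"
  proof (rule ccontr)
    assume "{a,b} \<noteq> eu"
    then have "{a,b} \<in> G1 V w - {eu}" using abG by simp
    then have "b \<in> gcomp (G1 V w - {eu}) u" using gcomp_step[of a "G1 V w - {eu}" u b] ab(3) eu(2) abG(2) by simp
    then show False using ab(4) eu(2) by simp
  qed
  obtain x where x: "eu = {u,x}" "x \<noteq> u" "x \<notin> gcomp (G1 V w - {eu}) u"
    using lw_props(5)[OF eu(1) m] by blast
  have "a \<noteq> x"
  proof
    assume "a = x" then have "x \<in> S V w l u" using ab(3) by simp
    then show False using x(3) eu(2) by simp
  qed
  moreover have "a \<in> {u,x}" using \<open>{a,b} = eu\<close> x(1) by (metis insertI1)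
  ultimately have "a = u" by simp
  then show False using aSv unv by simp
qed

end

definition Xs :: "('a \<Rightarrow> 'a \<Rightarrow> nat) \<Rightarrow> 'a set \<Rightarrow> 'a list \<Rightarrow> nat" where
  "Xs w A xs = (\<Sum>i<length xs. if xs!i \<in> A \<or> xs!(Suc i mod length xs) \<in> A
                     then w (xs!i) (xs!(Suc i mod length xs)) - 1 else 0)"

locale setting2 = setting +
  assumes lpos: "0 < l"
begin

lemma len3: "distinct xs \<Longrightarrow> set xs = V \<Longrightarrow> 3 \<le> length xs"
  using distinct_card[of xs] cV ln lpos by simp

lemma rc_le:
  assumes v: "v \<in> L V w l" and d: "distinct xs" and sx: "set xs = V"
  shows "rc V w l v \<le> 3 * real (Xs w (S V w l v) xs)"
proof -
  obtain E where E: "\<forall>a\<in>S V w l v. \<forall>b\<in>V. b \<notin> S V w l v \<longrightarrow> w a b = 1 \<longrightarrow> {a,b} = E"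
    using S_light[OF v] by blast
  obtain z where z: "z \<in> V" "z \<notin> S V w l v" using S_out[OF v] by blast
  obtain R where R: "is_reconf (S V w l v) R"
    "real (\<Sum>p\<in>#R. w (fst p) (snd p)) + 1/2 * real (\<Sum>u\<in>odd_vertices (S V w l v) R. ordist V w l v u)
       - (real (card (S V w l v)) - 1) \<le> 3 * real (Xs w (S V w l v) xs)"
    using perset[OF d sx len3[OF d sx] m S_basic(1)[OF v] z S_basic(2)[OF v] S_conn[OF v] E S_ord[OF v]]
    unfolding Xs_def by blast
  define Q where "Q = {rcost V w l v R | R. is_reconf (S V w l v) R}"
  have inQ: "rcost V w l v R \<in> Q" unfolding Q_def using R(1) by blast
  have bdd: "bdd_below Q"
  proof (rule bdd_belowI)
    fix x assume "x \<in> Q"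
    then obtain R' where "x = rcost V w l v R'" unfolding Q_def by blast
    moreover have "0 \<le> real (\<Sum>p\<in>#R'. w (fst p) (snd p))" "0 \<le> real (\<Sum>u\<in>odd_vertices (S V w l v) R'. ordist V w l v u)"
      by (rule of_nat_0_le_iff)+
    ultimately show "- real (card (S V w l v)) \<le> x" unfolding rcost_def by linarith
  qed
  have "rc V w l v \<le> rcost V w l v R" unfolding rc_def Q_def[symmetric] using inQ bdd by (rule cInf_lower)
  also have "\<dots> \<le> 3 * real (Xs w (S V w l v) xs)" using R(2) unfolding rcost_def .
  finally show ?thesis .
qed

lemma finL: "finite (L V w l)"
proof -
  have "L V w l \<subseteq> V" unfolding L_def max_light_def light_def by blast
  then show ?thesis using fin finite_subset by blast
qed

lemma card_hit: "card {v \<in> L V w l. y \<in> S V w l v} \<le> 1"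
proof -
  have "\<forall>a\<in>{v \<in> L V w l. y \<in> S V w l v}. \<forall>b\<in>{v \<in> L V w l. y \<in> S V w l v}. a = b"
  proof (intro ballI)
    fix a b assume a: "a \<in> {v \<in> L V w l. y \<in> S V w l v}" and b: "b \<in> {v \<in> L V w l. y \<in> S V w l v}"
    show "a = b"
    proof (rule ccontr)
      assume "a \<noteq> b"
      then have "S V w l a \<inter> S V w l b = {}" using S_disj a b by simp
      then show False using a b by blast
    qed
  qed
  moreover have "finite {v \<in> L V w l. y \<in> S V w l v}" using finL by simp
  ultimately show ?thesis by (simp add: card_le_Suc0_iff_eq)
qed

lemma sum_hit: "(\<Sum>v\<in>L V w l. if y \<in> S V w l v then (d::nat) else 0) \<le> d"
proof -
  have "(\<Sum>v\<in>L V w l. if y \<in> S V w l v then d else 0) = (\<Sum>v\<in>{v \<in> L V w l. y \<in> S V w l v}. d)"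
    using sum.inter_filter[OF finL, of "\<lambda>_. d" "\<lambda>v. y \<in> S V w l v"] by simp
  also have "\<dots> = card {v \<in> L V w l. y \<in> S V w l v} * d" by simp
  also have "\<dots> \<le> 1 * d" using card_hit by (rule mult_right_mono) simp
  finally show ?thesis by simp
qed

lemma sum_X:
  "(\<Sum>v\<in>L V w l. Xs w (S V w l v) xs)
     \<le> 2 * (\<Sum>i<length xs. w (xs!i) (xs!(Suc i mod length xs)) - 1)"
proof -
  define N where "N = length xs"
  define a where "a i = xs!i" for i
  define b where "b i = xs!(Suc i mod N)" for i
  define dd where "dd i = w (xs!i) (xs!(Suc i mod N)) - 1" for i
  have "(\<Sum>v\<in>L V w l. Xs w (S V w l v) xs)
      = (\<Sum>v\<in>L V w l. \<Sum>i<N. if a i \<in> S V w l v \<or> b i \<in> S V w l v then dd i else 0)"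
    unfolding Xs_def N_def a_def b_def dd_def by simp
  also have "\<dots> = (\<Sum>i<N. \<Sum>v\<in>L V w l. if a i \<in> S V w l v \<or> b i \<in> S V w l v then dd i else 0)"
    by (rule sum.swap)
  also have "\<dots> \<le> (\<Sum>i<N. 2 * dd i)"
  proof (rule sum_mono)
    fix i
    have "(\<Sum>v\<in>L V w l. if a i \<in> S V w l v \<or> b i \<in> S V w l v then dd i else 0)
        \<le> (\<Sum>v\<in>L V w l. (if a i \<in> S V w l v then dd i else 0) + (if b i \<in> S V w l v then dd i else 0))"
      by (rule sum_mono) auto
    also have "\<dots> = (\<Sum>v\<in>L V w l. if a i \<in> S V w l v then dd i else 0) + (\<Sum>v\<in>L V w l. if b i \<in> S V w l v then dd i else 0)"
      by (rule sum.distrib)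
    also have "\<dots> \<le> dd i + dd i" using sum_hit[of "a i" "dd i"] sum_hit[of "b i" "dd i"] by (rule add_mono)
    finally show "(\<Sum>v\<in>L V w l. if a i \<in> S V w l v \<or> b i \<in> S V w l v then dd i else 0) \<le> 2 * dd i" by simp
  qed
  also have "\<dots> = 2 * (\<Sum>i<length xs. w (xs!i) (xs!(Suc i mod length xs)) - 1)"
    unfolding N_def dd_def by (simp add: sum_distrib_left)
  finally show ?thesis .
qed

lemma tw_eq:
  assumes d: "distinct xs" and sx: "set xs = V"
  shows "tour_weight w xs = (\<Sum>i<length xs. w (xs!i) (xs!(Suc i mod length xs)) - 1) + n"
proof -
  have N: "length xs = n" using distinct_card[OF d] sx cV by simp
  have N3: "3 \<le> length xs" using len3[OF d sx] .
  have ge: "\<And>i. i < length xs \<Longrightarrow> 1 \<le> w (xs!i) (xs!(Suc i mod length xs))"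
  proof -
    fix i assume i: "i < length xs"
    have si: "Suc i mod length xs < length xs" using i by (intro mod_less_divisor) (cases xs, auto)
    have "Suc i mod length xs \<noteq> i"
    proof (cases "Suc i < length xs")
      case True then show ?thesis by simp
    next
      case False then have "Suc i = length xs" using i by simp
      then show ?thesis using N3 by simp
    qed
    then have "xs!i \<noteq> xs!(Suc i mod length xs)" using nth_eq_iff_index_eq[OF d i si] by simp
    moreover have "xs!i \<in> V" "xs!(Suc i mod length xs) \<in> V" using i si sx by auto
    moreover have "\<forall>u\<in>V. \<forall>v\<in>V. u \<noteq> v \<longrightarrow> w u v \<ge> 1" using m unfolding int_metric_def by simp
    ultimately show "1 \<le> w (xs!i) (xs!(Suc i mod length xs))" by blast
  qed
  have "tour_weight w xs = (\<Sum>i<length xs. (w (xs!i) (xs!(Suc i mod length xs)) - 1) + 1)"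
    unfolding tour_weight_def
  proof (rule sum.cong[OF refl])
    fix i assume "i \<in> {..<length xs}"
    then show "w (xs ! i) (xs ! ((i + 1) mod length xs)) = w (xs!i) (xs!(Suc i mod length xs)) - 1 + 1"
      using ge[of i] by simp
  qed
  also have "\<dots> = (\<Sum>i<length xs. w (xs!i) (xs!(Suc i mod length xs)) - 1) + (\<Sum>i<length xs. 1)"
    by (rule sum.distrib)
  finally show ?thesis using N by simp
qed

lemma main:
  shows "real (TSP V w) \<ge> real n + (1/7) * (\<Sum>v\<in>L V w l. rc V w l v)"
proof -
  define T where "T = {tour_weight w xs | xs. distinct xs \<and> set xs = V}"
  have "T \<subseteq> tour_weight w ` {xs. set xs \<subseteq> V \<and> length xs \<le> card V}"
    unfolding T_def using distinct_card by fastforce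
  then have finT: "finite T" using finite_lists_length_le[OF fin] finite_subset by blast
  obtain xs0 where "set xs0 = V" "distinct xs0" using finite_distinct_list[OF fin] by blast
  then have "T \<noteq> {}" unfolding T_def by blast
  then have "Min T \<in> T" using finT by (rule Min_in[rotated])
  then obtain xs where xs: "distinct xs" "set xs = V" "TSP V w = tour_weight w xs"
    unfolding T_def TSP_def by auto
  define D where "D = (\<Sum>i<length xs. w (xs!i) (xs!(Suc i mod length xs)) - 1)"
  have tw: "real (TSP V w) = real D + real n" using tw_eq[OF xs(1,2)] xs(3) unfolding D_def by simp
  have "(\<Sum>v\<in>L V w l. rc V w l v) \<le> (\<Sum>v\<in>L V w l. 3 * real (Xs w (S V w l v) xs))"
    using rc_le[OF _ xs(1,2)] by (rule sum_mono)
  also have "\<dots> = 3 * real (\<Sum>v\<in>L V w l. Xs w (S V w l v) xs)" by (simp add: sum_distrib_left)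
  also have "\<dots> \<le> 3 * real (2 * D)"
  proof -
    have "real (\<Sum>v\<in>L V w l. Xs w (S V w l v) xs) \<le> real (2 * D)"
      using sum_X[of xs] unfolding D_def by (rule of_nat_mono)
    then show ?thesis by simp
  qed
  finally have "(\<Sum>v\<in>L V w l. rc V w l v) \<le> 6 * real D" by simp
  then show ?thesis using tw by simp
qed

end

theorem mainTheorem7:
  fixes V :: "'a set" and w :: "'a \<Rightarrow> 'a \<Rightarrow> nat" and n l :: nat
  assumes "finite V" and "card V = n"
    and "int_metric V w"
    and "connected_graph V (G1 V w)"
    and "0 < l" and "2 * l < n"
  shows "real (TSP V w) \<ge> real n + (1/7) * (\<Sum>v\<in>L V w l. rc V w l v)"
proof -
  interpret setting2 V w n l using assms by unfold_locales
  show ?thesis by (rule main)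
qed

end
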